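(* Assume $\mathfrak g$ is noncompact and has no nonzero proper $\sigma$-stable ideals. Then every root $\alpha\in\Sigma$ with $\mathfrak k_\mathbb C(\mathfrak t,\alpha)\ne\{0\}$ can be written as $\alpha=\beta+\gamma$ with $\beta,\gamma\in\Sigma(\mathfrak m_\mathbb C,\mathfrak t)\cup\{0\}$.
   Context: Let $G$ be a connected real semisimple Lie group with Lie algebra $\mathfrak g$. Let $\sigma$ be an involution of $G$ and $\theta$ a Cartan involution with $\sigma\theta=\theta\sigma$; the same letters denote the induced involutions of $\mathfrak g$. Let $\mathfrak g=\mathfrak k\oplus\mathfrak m$ and $\mathfrak g=\mathfrak h\oplus\mathfrak q$ be the $\pm1$-eigenspace decompositions for $\theta$ and $\sigma$. Let $\mathfrak t$ be a maximal abelian subspace of $\mathfrak k\cap\mathfrak q$. For a linear form $\alpha:\mathfrak t\to i\mathbb R$ put - $\mathfrak g_\mathbb C(\mathfrak t,\alpha)=\{X\in\mathfrak g_\mathbb C\mid[Y,X]=\alpha(Y)X\ \forall Y\in\mathfrak t\}$, - $\mathfrak k_\mathbb C(\mathfrak t,\alpha)=\mathfrak g_\mathbb C(\mathfrak t,\alpha)\cap\mathfrak k_\mathbb C$, - $\mathfrak m_\mathbb C(\mathfrak t,\alpha)=\mathfrak g_\mathbb C(\mathfrak t,\alpha)\cap\mathfrak m_\mathbb C$. Let $\Sigma=\{\alpha\neq0\mid\mathfrak g_\mathbb C(\mathfrak t,\alpha)\ne\{0\}\}$ and $\Sigma(\mathfrak m_\mathbb C,\mathfrak t)=\{\alpha\ne0\mid\mathfrak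 m_\mathbb C(\mathfrak t,\alpha)\ne\{0\}\}$. *)

theory Defs
  imports "HOL-Analysis.Analysis"
begin

definition lie_algebra :: "('a::euclidean_space \<Rightarrow> 'a \<Rightarrow> 'a) \<Rightarrow> bool" where
  "lie_algebra br \<longleftrightarrow> bilinear br \<and> (\<forall>x. br x x = 0) \<and>
     (\<forall>x y z. br x (br y z) + br y (br z x) + br z (br x y) = 0)"

definition lie_ideal :: "('a::euclidean_space \<Rightarrow> 'a \<Rightarrow> 'a) \<Rightarrow> 'a set \<Rightarrow> bool" where
  "lie_ideal br I \<longleftrightarrow> subspace I \<and> (\<forall>x y. y \<in> I \<longrightarrow> br x y \<in> I)"

definition derived :: "('a::euclidean_space \<Rightarrow> 'a \<Rightarrow> 'a) \<Rightarrow> 'a set \<Rightarrow> 'a set" where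
  "derived br S = span {br x y | x y. x \<in> S \<and> y \<in> S}"

definition lie_solvable :: "('a::euclidean_space \<Rightarrow> 'a \<Rightarrow> 'a) \<Rightarrow> 'a set \<Rightarrow> bool" where
  "lie_solvable br I \<longleftrightarrow> (\<exists>n. (derived br ^^ n) I = {0})"

definition semisimple :: "('a::euclidean_space \<Rightarrow> 'a \<Rightarrow> 'a) \<Rightarrow> bool" where
  "semisimple br \<longleftrightarrow> lie_algebra br \<and>
     (\<forall>I. lie_ideal br I \<and> lie_solvable br I \<longrightarrow> I = {0})"

definition lie_aut :: "('a::euclidean_space \<Rightarrow> 'a \<Rightarrow> 'a) \<Rightarrow> ('a \<Rightarrow> 'a) \<Rightarrow> bool" where
  "lie_aut br f \<longleftrightarrow> linear f \<and> bij f \<and> (\<forall>x y. f (br x y) = br (f x) (f y))"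

definition lie_involution :: "('a::euclidean_space \<Rightarrow> 'a \<Rightarrow> 'a) \<Rightarrow> ('a \<Rightarrow> 'a) \<Rightarrow> bool" where
  "lie_involution br f \<longleftrightarrow> lie_aut br f \<and> (\<forall>x. f (f x) = x)"

definition trace_map :: "('a::euclidean_space \<Rightarrow> 'a) \<Rightarrow> real" where
  "trace_map f = (\<Sum>b\<in>Basis. f b \<bullet> b)"

definition killing :: "('a::euclidean_space \<Rightarrow> 'a \<Rightarrow> 'a) \<Rightarrow> 'a \<Rightarrow> 'a \<Rightarrow> real" where
  "killing br x y = trace_map (\<lambda>z. br x (br y z))"

definition cartan_involution :: "('a::euclidean_space \<Rightarrow> 'a \<Rightarrow> 'a) \<Rightarrow> ('a \<Rightarrow> 'a) \<Rightarrow> bool" where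
  "cartan_involution br \<theta> \<longleftrightarrow> lie_involution br \<theta> \<and>
     (\<forall>x. x \<noteq> 0 \<longrightarrow> - killing br x (\<theta> x) > 0)"

text \<open>A semisimple real Lie algebra is compact iff its Killing form is negative definite.\<close>
definition compact_lie :: "('a::euclidean_space \<Rightarrow> 'a \<Rightarrow> 'a) \<Rightarrow> bool" where
  "compact_lie br \<longleftrightarrow> (\<forall>x. x \<noteq> 0 \<longrightarrow> killing br x x < 0)"

definition plus_eig :: "('a::real_vector \<Rightarrow> 'a) \<Rightarrow> 'a set" where
  "plus_eig f = {x. f x = x}"

definition minus_eig :: "('a::real_vector \<Rightarrow> 'a) \<Rightarrow> 'a set" where
  "minus_eig f = {x. f x = - x}"

definition max_abelian_subspace ::
  "('a::euclidean_space \<Rightarrow> 'a \<Rightarrow> 'a) \<Rightarrow> 'a set \<Rightarrow> 'a set \<Rightarrow> bool" where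
  "max_abelian_subspace br t S \<longleftrightarrow>
     subspace t \<and> t \<subseteq> S \<and> (\<forall>x\<in>t. \<forall>y\<in>t. br x y = 0) \<and>
     (\<forall>u. subspace u \<and> t \<subseteq> u \<and> u \<subseteq> S \<and> (\<forall>x\<in>u. \<forall>y\<in>u. br x y = 0) \<longrightarrow> u = t)"

text \<open>Complexification g_C = g + i g, an element X1 + i X2 represented by the pair (X1, X2).
  A linear form alpha : t \<rightarrow> i\<real> is represented as alpha = i * lam with lam a real
  linear form (only its values on t matter).
  [Y, X1 + i X2] = i lam(Y) (X1 + i X2)  iff  [Y,X1] = -lam(Y) X2 and [Y,X2] = lam(Y) X1.
  The set V is the real subspace (g, k or m) whose complexification we intersect with.\<close>
definition weight_space ::
  "('a::euclidean_space \<Rightarrow> 'a \<Rightarrow> 'a) \<Rightarrow> 'a set \<Rightarrow> ('a \<Rightarrow> real) \<Rightarrow> 'a set \<Rightarrow> ('a \<times> 'a) set" where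
  "weight_space br t lam V =
     {(X1, X2). X1 \<in> V \<and> X2 \<in> V \<and>
        (\<forall>Y\<in>t. br Y X1 = - (lam Y *\<^sub>R X2) \<and> br Y X2 = lam Y *\<^sub>R X1)}"

definition is_root ::
  "('a::euclidean_space \<Rightarrow> 'a \<Rightarrow> 'a) \<Rightarrow> 'a set \<Rightarrow> ('a \<Rightarrow> real) \<Rightarrow> 'a set \<Rightarrow> bool" where
  "is_root br t lam V \<longleftrightarrow> (\<exists>Y\<in>t. lam Y \<noteq> 0) \<and> (\<exists>X\<in>weight_space br t lam V. X \<noteq> (0, 0))"

end

theory Submission
  imports Defs
begin

lemma lin_expand:
  fixes f :: "'a::euclidean_space \<Rightarrow> 'b::real_vector"
  assumes "linear f" shows "f x = (\<Sum>c\<in>Basis. (x \<bullet> c) *\<^sub>R f c)"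
proof -
  have "f x = f (\<Sum>c\<in>Basis. (x \<bullet> c) *\<^sub>R c)" by (simp add: euclidean_representation)
  also have "\<dots> = (\<Sum>c\<in>Basis. (x \<bullet> c) *\<^sub>R f c)"
    using assms by (simp add: linear_sum linear_scale)
  finally show ?thesis .
qed

lemma trace_comm:
  fixes f g :: "'a::euclidean_space \<Rightarrow> 'a"
  assumes "linear f" "linear g"
  shows "trace_map (\<lambda>z. f (g z)) = trace_map (\<lambda>z. g (f z))"
proof -
  have 1: "trace_map (\<lambda>z. f (g z)) = (\<Sum>b\<in>Basis. \<Sum>c\<in>Basis. (g b \<bullet> c) * (f c \<bullet> b))"
    unfolding trace_map_def
    by (rule sum.cong[OF refl], subst lin_expand[OF assms(1)]) (simp add: inner_sum_left)
  have 2: "trace_map (\<lambda>z. g (f z)) = (\<Sum>b\<in>Basis. \<Sum>c\<in>Basis. (f b \<bullet> c) * (g c \<bullet> b))"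
    unfolding trace_map_def
    by (rule sum.cong[OF refl], subst lin_expand[OF assms(2)]) (simp add: inner_sum_left)
  show ?thesis unfolding 1 2 by (subst sum.swap) (simp add: mult.commute)
qed

lemma quad_nonneg_lin_zero:
  fixes a b :: real
  assumes "\<forall>s. 2 * s * b + s^2 * a \<ge> 0"
  shows "b = 0"
proof (rule ccontr)
  assume nz: "b \<noteq> 0"
  define c where "c = \<bar>a\<bar>"
  have c0: "c \<ge> 0" unfolding c_def by simp
  define s where "s = - b / (c + 1)"
  have pos: "c + 1 > 0" using c0 by simp
  have "2 * s * b + s^2 * a \<le> 2 * s * b + s^2 * c" unfolding c_def by (simp add: mult_left_mono)
  also have "\<dots> = (b^2 / (c + 1)^2) * (c - 2 * (c + 1))"
    unfolding s_def power2_eq_square using pos by (simp add: divide_simps) (simp add: algebra_simps)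
  also have "\<dots> < 0"
    using nz pos c0 by (intro mult_pos_neg) auto
  finally show False using assms by (meson not_le)
qed


lemma sym_eigen:
  fixes P :: "'a::euclidean_space \<Rightarrow> 'a \<Rightarrow> real" and S :: "'a \<Rightarrow> 'a"
  assumes bP: "bilinear P" and symP: "\<And>x y. P x y = P y x" and posP: "\<And>x. x \<noteq> 0 \<Longrightarrow> P x x > 0"
    and W: "subspace W" "w \<in> W" "w \<noteq> 0" and S: "linear S" "\<And>x. x \<in> W \<Longrightarrow> S x \<in> W"
    and Ssym: "\<And>x y. x \<in> W \<Longrightarrow> y \<in> W \<Longrightarrow> P (S x) y = P x (S y)"
  shows "\<exists>x\<in>W. x \<noteq> 0 \<and> (\<exists>c. S x = c *\<^sub>R x)"
proof -
  define K where "K = sphere 0 1 \<inter> W"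
  have Kc: "compact K" unfolding K_def by (rule compact_Int_closed) (auto simp: closed_subspace W)
  have "w /\<^sub>R norm w \<in> K" unfolding K_def using W by (auto simp: subspace_scale)
  then have Kne: "K \<noteq> {}" by auto
  define f where "f x = P (S x) x / P x x" for x
  have cS: "continuous_on K S"
    using S(1) linear_continuous_on linear_conv_bounded_linear by blast
  have cP1: "continuous_on K (\<lambda>x. P (S x) x)"
    by (rule bilinear_continuous_on_compose[OF cS continuous_on_id bP])
  have cP2: "continuous_on K (\<lambda>x. P x x)"
    by (rule bilinear_continuous_on_compose[OF continuous_on_id continuous_on_id bP])
  have Knz: "\<And>x. x \<in> K \<Longrightarrow> x \<noteq> 0" unfolding K_def by auto
  have cf: "continuous_on K f" unfolding f_def
    by (rule continuous_on_divide[OF cP1 cP2]) (auto dest!: Knz posP)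
  obtain x0 where x0: "x0 \<in> K" "\<And>y. y \<in> K \<Longrightarrow> f y \<le> f x0"
    using continuous_attains_sup[OF Kc Kne cf] by blast
  define c where "c = f x0"
  have x0W: "x0 \<in> W" and x0nz: "x0 \<noteq> 0" using x0(1) Knz unfolding K_def by auto
  have le: "P (S y) y \<le> c * P y y" if yW: "y \<in> W" for y
  proof (cases "y = 0")
    case True
    then show ?thesis using S(1) bP by (simp add: linear_0 bilinear_rzero)
  next
    case False
    define n where "n = norm y"
    have n0: "n > 0" using False n_def by simp
    have yK: "(1/n) *\<^sub>R y \<in> K" unfolding K_def n_def using yW False W(1) by (auto simp: subspace_scale)
    have "f ((1/n) *\<^sub>R y) = f y"
      unfolding f_def using S(1) bP n0
      by (simp add: linear_scale bilinear_lmul bilinear_rmul)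
    then have "f y \<le> c" using x0(2)[OF yK] c_def by simp
    then show ?thesis using posP[OF False] unfolding f_def by (simp add: divide_le_eq)
  qed
  have eq: "P (S x0) x0 = c * P x0 x0" using posP[OF x0nz] unfolding c_def f_def by simp
  define h where "h = c *\<^sub>R x0 - S x0"
  have hW: "h \<in> W" unfolding h_def using W x0W S by (simp add: subspace_diff subspace_scale)
  have hh: "P h h = c * P x0 h - P (S x0) h" unfolding h_def using bP
    by (simp add: bilinear_lsub bilinear_lmul)
  have Sh: "P (S h) x0 = P (S x0) h" using Ssym[OF hW x0W] symP by metis
  have hx: "P h x0 = P x0 h" using symP by metis
  have "2 * s * P h h + s^2 * (c * P h h - P (S h) h) \<ge> 0" for s
  proof -
    have inW: "x0 + s *\<^sub>R h \<in> W" using x0W hW W by (simp add: subspace_add subspace_scale)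
    have hh2: "c * P x0 h - P (S x0) h = P h h" using hh by simp
    have "c * P (x0 + s *\<^sub>R h) (x0 + s *\<^sub>R h) - P (S (x0 + s *\<^sub>R h)) (x0 + s *\<^sub>R h)
          = (c * P x0 x0 - P (S x0) x0) + 2 * s * (c * P x0 h - P (S x0) h) + s^2 * (c * P h h - P (S h) h)"
      using S(1) bP Sh hx
      by (simp add: linear_add linear_scale bilinear_ladd bilinear_radd bilinear_lmul bilinear_rmul
            algebra_simps power2_eq_square)
    also have "\<dots> = (c * P x0 x0 - P (S x0) x0) + 2 * s * P h h + s^2 * (c * P h h - P (S h) h)"
      by (simp only: hh2)
    finally have "c * P (x0 + s *\<^sub>R h) (x0 + s *\<^sub>R h) - P (S (x0 + s *\<^sub>R h)) (x0 + s *\<^sub>R h)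
          = (c * P x0 x0 - P (S x0) x0) + 2 * s * P h h + s^2 * (c * P h h - P (S h) h)" .
    then show ?thesis using le[OF inW] eq by linarith
  qed
  then have "P h h = 0" by (intro quad_nonneg_lin_zero) auto
  then have "h = 0" using posP[of h] by (cases "h = 0") auto
  then have "S x0 = c *\<^sub>R x0" unfolding h_def by simp
  then show ?thesis using x0W x0nz by blast
qed


lemma bil_linR: "bilinear P \<Longrightarrow> linear (P x)"
  by (simp add: bilinear_def)

lemma bil_linL: "bilinear P \<Longrightarrow> linear (\<lambda>x. P x y)"
  by (simp add: bilinear_def)

lemma span_zero_form:
  assumes "linear g" "\<And>b. b \<in> B \<Longrightarrow> g b = (0::real)" "y \<in> span B"
  shows "g y = 0"
proof -
  have "subspace {y. g y = 0}" using assms(1)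
    by (auto simp: subspace_def linear_add linear_scale linear_0)
  then have "span B \<subseteq> {y. g y = 0}" using assms(2) by (intro span_minimal) auto
  then show ?thesis using assms(3) by auto
qed

lemma P_proj:
  fixes P :: "'a::euclidean_space \<Rightarrow> 'a \<Rightarrow> real"
  assumes bP: "bilinear P" and symP: "\<And>x y. P x y = P y x" and posP: "\<And>x. x \<noteq> 0 \<Longrightarrow> P x x > 0"
    and R: "subspace R"
  shows "\<exists>r\<in>R. \<forall>y\<in>R. P (x - r) y = 0"
proof -
  obtain B where B: "B \<subseteq> R" "independent B" "R \<subseteq> span B" "card B = dim R"
    using basis_exists[of R] by blast
  have fB: "finite B" using B(2) by (rule finiteI_independent)
  define L where "L z = (\<Sum>b\<in>B. P z b *\<^sub>R b)" for z
  have linL: "linear L" unfolding L_def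
    by (rule linearI) (simp_all add: bilinear_ladd[OF bP] bilinear_lmul[OF bP] scaleR_add_left
          sum.distrib scaleR_sum_right)
  have LR: "L z \<in> R" for z unfolding L_def using B(1) R
    by (intro subspace_sum) (auto simp: subspace_scale)
  have key: "P z y = 0" if "L z = 0" "y \<in> R" for z y
  proof -
    have "P z (L z) = (\<Sum>b\<in>B. (P z b)^2)" unfolding L_def
      by (subst linear_sum[OF bil_linR[OF bP]]) (simp add: bilinear_rmul[OF bP] power2_eq_square)
    then have "(\<Sum>b\<in>B. (P z b)^2) = 0" using that(1) bP by (simp add: bilinear_rzero)
    then have "\<forall>b\<in>B. P z b = 0" using fB by (simp add: sum_nonneg_eq_0_iff)
    then show ?thesis using span_zero_form[OF bil_linR[OF bP], of B z y] that(2) B(3) by auto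
  qed
  have inj: "inj_on L (span R)"
  proof (rule inj_onI)
    fix a b assume ab: "a \<in> span R" "b \<in> span R" "L a = L b"
    have "a - b \<in> R" using ab R by (simp add: span_eq_iff[THEN iffD2] subspace_diff)
    moreover have "L (a - b) = 0" using ab(3) linL by (simp add: linear_diff)
    ultimately have "P (a - b) (a - b) = 0" using key by blast
    then show "a = b" using posP[of "a - b"] by (cases "a - b = 0") auto
  qed
  have "L ` R = R"
  proof (rule subspace_dim_equal)
    show "subspace (L ` R)" using linL R by (rule linear_subspace_image)
    show "L ` R \<subseteq> R" using LR by auto
    show "dim R \<le> dim (L ` R)" using dim_image_eq[OF linL inj] by simp
  qed (rule R)
  then obtain r where r: "r \<in> R" "L r = L x" using LR[of x] by (metis imageE)
  have "L (x - r) = 0" using r linL by (simp add: linear_diff)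
  then show ?thesis using r(1) key by blast
qed

lemma trace_diff: "trace_map (\<lambda>z. f z - g z) = trace_map f - trace_map g"
  unfolding trace_map_def by (simp add: inner_diff_left sum_subtractf)

locale LS =
  fixes br :: "'a::euclidean_space \<Rightarrow> 'a \<Rightarrow> 'a" and \<theta> :: "'a \<Rightarrow> 'a" and t :: "'a set"
  assumes lie: "lie_algebra br" and cart: "cartan_involution br \<theta>"
    and tsub: "subspace t" and tk: "\<And>Y. Y \<in> t \<Longrightarrow> \<theta> Y = Y"
    and tab: "\<And>Y Z. Y \<in> t \<Longrightarrow> Z \<in> t \<Longrightarrow> br Y Z = 0"
begin

lemma bl: "bilinear br" using lie by (simp add: lie_algebra_def)
lemma jac: "br x (br y z) + br y (br z x) + br z (br x y) = 0" using lie by (simp add: lie_algebra_def)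
lemma alt: "br x x = 0" using lie by (simp add: lie_algebra_def)
lemma anti: "br x y = - br y x"
proof -
  have "br (x + y) (x + y) = 0" by (rule alt)
  then have "br x x + br x y + (br y x + br y y) = 0" using bl by (simp add: bilinear_ladd bilinear_radd)
  then have "br x y + br y x = 0" by (simp add: alt)
  then show ?thesis by (subst eq_neg_iff_add_eq_0)
qed
lemma der: "br Y (br x y) = br (br Y x) y + br x (br Y y)"
proof -
  have "br Y (br x y) + br x (br y Y) + br y (br Y x) = 0" by (rule jac)
  moreover have "br x (br y Y) = - br x (br Y y)" using bl by (metis anti bilinear_rneg)
  moreover have "br y (br Y x) = - br (br Y x) y" by (rule anti)
  ultimately have "br Y (br x y) - br x (br Y y) - br (br Y x) y = 0" by simp
  then show ?thesis by (simp add: algebra_simps)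
qed
lemma linbr: "linear (br x)" using bl by (simp add: bilinear_def)
lemma linbrL: "linear (\<lambda>x. br x y)" using bl by (simp add: bilinear_def)
lemma thlin: "linear \<theta>" using cart by (simp add: cartan_involution_def lie_involution_def lie_aut_def)
lemma thbr: "\<theta> (br x y) = br (\<theta> x) (\<theta> y)" using cart by (simp add: cartan_involution_def lie_involution_def lie_aut_def)
lemma thth: "\<theta> (\<theta> x) = x" using cart by (simp add: cartan_involution_def lie_involution_def)
lemma kpos: "x \<noteq> 0 \<Longrightarrow> - killing br x (\<theta> x) > 0" using cart by (simp add: cartan_involution_def)

lemma kill_bil: "bilinear (killing br)"
  unfolding bilinear_def killing_def trace_map_def
proof safe
  fix x show "linear (\<lambda>y. \<Sum>b\<in>Basis. br x (br y b) \<bullet> b)"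
    by (rule linearI) (simp_all add: bilinear_ladd[OF bl] bilinear_radd[OF bl] bilinear_lmul[OF bl]
        bilinear_rmul[OF bl] inner_add_left sum.distrib sum_distrib_left)
next
  fix y show "linear (\<lambda>x. \<Sum>b\<in>Basis. br x (br y b) \<bullet> b)"
    by (rule linearI) (simp_all add: bilinear_ladd[OF bl] bilinear_lmul[OF bl]
        inner_add_left sum.distrib sum_distrib_left)
qed

lemma kill_sym: "killing br x y = killing br y x"
  unfolding killing_def by (rule trace_comm[OF linbr linbr])

lemma kill_inv: "killing br (br x y) z = killing br x (br y z)"
proof -
  have e1: "br (br a b) u = br a (br b u) - br b (br a u)" for a b u using der[of a b u] by simp
  have lg: "linear (\<lambda>w. br x (br z w))"
  proof -
    have "linear (br x \<circ> br z)" by (intro linear_compose linbr)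
    then show ?thesis by (simp add: o_def)
  qed
  have "killing br (br x y) z = trace_map (\<lambda>w. br x (br y (br z w))) - trace_map (\<lambda>w. br y (br x (br z w)))"
    unfolding killing_def e1 by (rule trace_diff)
  moreover have "killing br x (br y z) = trace_map (\<lambda>w. br x (br y (br z w))) - trace_map (\<lambda>w. br x (br z (br y w)))"
    unfolding killing_def e1 using linbr[of x] by (simp add: linear_diff trace_diff)
  moreover have "trace_map (\<lambda>w. br y (br x (br z w))) = trace_map (\<lambda>w. br x (br z (br y w)))"
    using trace_comm[OF linbr[of y] lg] by simp
  ultimately show ?thesis by simp
qed

lemma kill_th: "killing br (\<theta> x) (\<theta> y) = killing br x y"
proof -
  have e: "br (\<theta> y) w = \<theta> (br y (\<theta> w))" for y w by (simp add: thbr thth)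
  have lg: "linear (\<lambda>w. br x (br y (\<theta> w)))"
  proof -
    have "linear (br x \<circ> (br y \<circ> \<theta>))" by (intro linear_compose linbr thlin)
    then show ?thesis by (simp add: o_def)
  qed
  have "killing br (\<theta> x) (\<theta> y) = trace_map (\<lambda>w. \<theta> (br x (br y (\<theta> w))))"
    unfolding killing_def by (simp add: e thth)
  also have "\<dots> = trace_map (\<lambda>w. br x (br y (\<theta> (\<theta> w))))"
    by (rule trace_comm[OF thlin lg])
  finally show ?thesis by (simp add: thth killing_def)
qed

definition P :: "'a \<Rightarrow> 'a \<Rightarrow> real" where "P x y = - killing br x (\<theta> y)"

lemma P_bil: "bilinear P"
proof -
  have "linear (\<lambda>x. killing br x y)" for y using kill_bil by (simp add: bilinear_def)
  moreover have "linear (\<lambda>y. killing br x (\<theta> y))" for x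
    using kill_bil thlin linear_compose[of \<theta> "killing br x"] by (simp add: bilinear_def o_def)
  ultimately show ?thesis unfolding bilinear_def P_def by (auto intro: linear_compose_neg)
qed

lemma P_sym: "P x y = P y x"
proof -
  have "killing br y (\<theta> x) = killing br (\<theta> y) (\<theta> (\<theta> x))" by (rule kill_th[symmetric])
  also have "\<dots> = killing br x (\<theta> y)" by (simp add: thth kill_sym)
  finally show ?thesis unfolding P_def by simp
qed

lemma P_pos: "x \<noteq> 0 \<Longrightarrow> P x x > 0" unfolding P_def by (rule kpos)

lemma P_skew: "\<theta> Y = Y \<Longrightarrow> P (br Y x) y = - P x (br Y y)"
proof -
  assume th: "\<theta> Y = Y"
  have "P (br Y x) y = killing br (br x Y) (\<theta> y)"
    unfolding P_def using kill_bil by (simp add: anti[of Y x] bilinear_lneg)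
  also have "\<dots> = killing br x (br Y (\<theta> y))" by (rule kill_inv)
  also have "\<dots> = - P x (br Y y)" unfolding P_def by (simp add: thbr th)
  finally show ?thesis .
qed

end

context LS begin

lemma m_sub: "subspace (minus_eig \<theta>)"
  unfolding subspace_def minus_eig_def using thlin by (simp add: linear_0 linear_add linear_scale)

lemma k_sub: "subspace (plus_eig \<theta>)"
  unfolding subspace_def plus_eig_def using thlin by (simp add: linear_0 linear_add linear_scale)

lemma brkm: "\<theta> Y = Y \<Longrightarrow> x \<in> minus_eig \<theta> \<Longrightarrow> br Y x \<in> minus_eig \<theta>"
  unfolding minus_eig_def by (simp add: thbr bilinear_rneg[OF bl])

lemma t_comm: "Y \<in> t \<Longrightarrow> Z \<in> t \<Longrightarrow> br Y (br Z x) = br Z (br Y x)"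
  using der[of Y Z x] tab[of Y Z] by (simp add: bilinear_lzero[OF bl])

definition good :: "'a \<Rightarrow> bool" where
  "good u \<longleftrightarrow> u \<in> minus_eig \<theta> \<and> (\<exists>\<nu> u'. linear \<nu> \<and> u' \<in> minus_eig \<theta> \<and>
     (\<forall>Y\<in>t. br Y u = \<nu> Y *\<^sub>R u' \<and> br Y u' = - (\<nu> Y *\<^sub>R u)))"

lemma scal_lemma:
  assumes QW: "subspace W" "W \<subseteq> minus_eig \<theta>" "\<And>Y x. Y \<in> t \<Longrightarrow> x \<in> W \<Longrightarrow> br Y x \<in> W"
    and w: "w \<in> W" "w \<noteq> 0"
    and minW: "\<And>W'. subspace W' \<Longrightarrow> W' \<subseteq> W \<Longrightarrow> (\<forall>Y\<in>t. \<forall>x\<in>W'. br Y x \<in> W') \<Longrightarrow>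
                 (\<exists>w\<in>W'. w \<noteq> 0) \<Longrightarrow> W' = W"
    and Y: "Y \<in> t"
  shows "\<exists>c. \<forall>x\<in>W. br Y (br Y x) = c *\<^sub>R x"
proof -
  define S where "S = (\<lambda>x. br Y (br Y x))"
  have linS: "linear S"
  proof -
    have "linear (br Y \<circ> br Y)" by (intro linear_compose linbr)
    then show ?thesis by (simp add: o_def S_def)
  qed
  have SW: "S x \<in> W" if "x \<in> W" for x unfolding S_def using QW(3)[OF Y] that by blast
  have Ssym: "P (S x) y = P x (S y)" for x y
    unfolding S_def using P_skew[OF tk[OF Y]] by simp
  obtain x1 c where x1: "x1 \<in> W" "x1 \<noteq> 0" "S x1 = c *\<^sub>R x1"
    using sym_eigen[OF P_bil P_sym P_pos QW(1) w linS SW Ssym] by blast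
  define E where "E = {x \<in> W. S x = c *\<^sub>R x}"
  have "subspace E" unfolding E_def subspace_def using QW(1) linS
    by (auto simp: subspace_0 subspace_add subspace_scale linear_0 linear_add linear_scale algebra_simps)
  moreover have "E \<subseteq> W" unfolding E_def by auto
  moreover have "\<forall>Z\<in>t. \<forall>x\<in>E. br Z x \<in> E"
  proof (intro ballI)
    fix Z x assume Z: "Z \<in> t" and x: "x \<in> E"
    have "S (br Z x) = br Z (S x)" unfolding S_def using t_comm[OF Y Z] by simp
    also have "\<dots> = c *\<^sub>R br Z x" using x unfolding E_def by (simp add: bilinear_rmul[OF bl])
    finally show "br Z x \<in> E" using x QW(3)[OF Z] unfolding E_def by auto
  qed
  moreover have "\<exists>w\<in>E. w \<noteq> 0" using x1 unfolding E_def by auto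
  ultimately have "E = W" by (rule minW)
  then show ?thesis unfolding E_def S_def by blast
qed

end

context LS begin

lemma good_from_min:
  assumes QW: "subspace W" "W \<subseteq> minus_eig \<theta>" "\<And>Y x. Y \<in> t \<Longrightarrow> x \<in> W \<Longrightarrow> br Y x \<in> W"
    and w: "w \<in> W" "w \<noteq> 0"
    and scal: "\<And>Y. Y \<in> t \<Longrightarrow> \<exists>c. \<forall>x\<in>W. br Y (br Y x) = c *\<^sub>R x"
  shows "good w"
proof (cases "\<forall>Y\<in>t. br Y w = 0")
  case True
  have "linear (\<lambda>_::'a. 0::real)" by (rule linearI) auto
  moreover have "(0::'a) \<in> minus_eig \<theta>" using m_sub by (rule subspace_0)
  ultimately show ?thesis unfolding good_def using True w QW(2)
    by (intro conjI exI[of _ "\<lambda>_. 0"] exI[of _ "0::'a"]) (auto simp: bilinear_rzero[OF bl])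
next
  case False
  then obtain Y0 where Y0: "Y0 \<in> t" "br Y0 w \<noteq> 0" by blast
  obtain c0 where c0: "\<And>x. x \<in> W \<Longrightarrow> br Y0 (br Y0 x) = c0 *\<^sub>R x" using scal[OF Y0(1)] by blast
  have "P (br Y0 w) (br Y0 w) = - P w (br Y0 (br Y0 w))" by (rule P_skew[OF tk[OF Y0(1)]])
  also have "\<dots> = - c0 * P w w" using c0[OF w(1)] by (simp add: bilinear_rmul[OF P_bil])
  finally have "- c0 * P w w > 0" using P_pos[OF Y0(2)] by simp
  moreover have "P w w > 0" using P_pos[OF w(2)] .
  ultimately have c0neg: "c0 < 0" by (simp add: mult_less_0_iff)
  define l where "l = sqrt (- c0)"
  have l0: "l > 0" unfolding l_def using c0neg by simp
  have ll: "l * l = - c0" unfolding l_def using c0neg by simp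
  define u' where "u' = (1 / l) *\<^sub>R br Y0 w"
  have u'W: "u' \<in> W" unfolding u'_def using QW(1) QW(3)[OF Y0(1) w(1)] by (simp add: subspace_scale)
  have u'nz: "u' \<noteq> 0" unfolding u'_def using l0 Y0(2) by simp
  have Pu': "P u' u' > 0" using P_pos[OF u'nz] .
  have mu: "\<exists>\<mu>. br Z w = \<mu> *\<^sub>R u' \<and> br Z u' = - (\<mu> *\<^sub>R w)" if Z: "Z \<in> t" for Z
  proof -
    obtain cZ where cZ: "\<And>x. x \<in> W \<Longrightarrow> br Z (br Z x) = cZ *\<^sub>R x" using scal[OF Z] by blast
    have YZ: "Y0 + Z \<in> t" using tsub Y0(1) Z by (rule subspace_add)
    obtain cS where cS: "\<And>x. x \<in> W \<Longrightarrow> br (Y0 + Z) (br (Y0 + Z) x) = cS *\<^sub>R x" using scal[OF YZ] by blast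
    have "br (Y0 + Z) (br (Y0 + Z) w) = br Y0 (br Y0 w) + br Y0 (br Z w) + (br Z (br Y0 w) + br Z (br Z w))"
      by (simp add: bilinear_ladd[OF bl] bilinear_radd[OF bl])
    also have "\<dots> = c0 *\<^sub>R w + 2 *\<^sub>R br Y0 (br Z w) + cZ *\<^sub>R w"
      using c0[OF w(1)] cZ[OF w(1)] t_comm[OF Z Y0(1), of w] by (simp add: scaleR_2)
    finally have "cS *\<^sub>R w = c0 *\<^sub>R w + 2 *\<^sub>R br Y0 (br Z w) + cZ *\<^sub>R w" using cS[OF w(1)] by simp
    then have "2 *\<^sub>R br Y0 (br Z w) = (cS - c0 - cZ) *\<^sub>R w" by (simp add: algebra_simps)
    then have "(1/2) *\<^sub>R (2 *\<^sub>R br Y0 (br Z w)) = (1/2) *\<^sub>R ((cS - c0 - cZ) *\<^sub>R w)" by simp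
    then have kk: "br Y0 (br Z w) = ((cS - c0 - cZ) / 2) *\<^sub>R w" by simp
    define k where "k = (cS - c0 - cZ) / 2"
    have kk': "br Y0 (br Z w) = k *\<^sub>R w" using kk k_def by simp
    have "c0 *\<^sub>R br Z w = br Y0 (br Y0 (br Z w))" using c0[OF QW(3)[OF Z w(1)]] by simp
    also have "\<dots> = k *\<^sub>R br Y0 w" using kk' by (simp add: bilinear_rmul[OF bl])
    also have "\<dots> = (k * l) *\<^sub>R u'" unfolding u'_def using l0 by simp
    finally have e1: "br Z w = ((k * l) / c0) *\<^sub>R u'" using c0neg
      by (metis (no_types, lifting) divide_inverse_commute less_irrefl scaleR_scaleR scaleR_right_imp_eq
          inverse_eq_divide right_inverse scaleR_one)
    have "br Z u' = (1 / l) *\<^sub>R br Y0 (br Z w)" unfolding u'_def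
      using t_comm[OF Z Y0(1), of w] by (simp add: bilinear_rmul[OF bl])
    also have "\<dots> = (k / l) *\<^sub>R w" using kk' by simp
    also have "k / l = - ((k * l) / c0)" using ll l0 c0neg
      by (metis (no_types, opaque_lifting) divide_divide_eq_right mult.commute neg_equal_iff_equal
          nonzero_mult_div_cancel_left divide_minus_right less_irrefl)
    finally have e2: "br Z u' = - (((k * l) / c0) *\<^sub>R w)" by simp
    show ?thesis using e1 e2 by blast
  qed
  define \<nu> where "\<nu> = (\<lambda>Z. P (br Z w) u' / P u' u')"
  have lin\<nu>: "linear \<nu>" unfolding \<nu>_def
    by (rule linearI) (simp_all add: bilinear_ladd[OF bl] bilinear_lmul[OF bl] bilinear_ladd[OF P_bil]
        bilinear_lmul[OF P_bil] add_divide_distrib)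
  have "\<forall>Z\<in>t. br Z w = \<nu> Z *\<^sub>R u' \<and> br Z u' = - (\<nu> Z *\<^sub>R w)"
  proof
    fix Z assume Z: "Z \<in> t"
    obtain \<mu> where \<mu>: "br Z w = \<mu> *\<^sub>R u'" "br Z u' = - (\<mu> *\<^sub>R w)" using mu[OF Z] by blast
    have "\<nu> Z = \<mu>" unfolding \<nu>_def \<mu>(1) using Pu' by (simp add: bilinear_lmul[OF P_bil])
    then show "br Z w = \<nu> Z *\<^sub>R u' \<and> br Z u' = - (\<nu> Z *\<^sub>R w)" using \<mu> by simp
  qed
  then show ?thesis unfolding good_def using lin\<nu> u'W QW(2) w(1) by blast
qed

end

context LS begin

lemma find_good:
  assumes U: "subspace U" "U \<subseteq> minus_eig \<theta>" "\<And>Y x. Y \<in> t \<Longrightarrow> x \<in> U \<Longrightarrow> br Y x \<in> U"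
    and u0: "u0 \<in> U" "u0 \<noteq> 0"
  shows "\<exists>u\<in>U. u \<noteq> 0 \<and> good u"
proof -
  define Q where "Q W \<longleftrightarrow> subspace W \<and> W \<subseteq> U \<and> (\<forall>Y\<in>t. \<forall>x\<in>W. br Y x \<in> W) \<and> (\<exists>w\<in>W. w \<noteq> 0)" for W
  have QU: "Q U" unfolding Q_def using U u0 by blast
  define n where "n = (LEAST n. \<exists>W. Q W \<and> dim W = n)"
  have "\<exists>W. Q W \<and> dim W = n" unfolding n_def by (rule LeastI_ex) (use QU in blast)
  then obtain W where W: "Q W" "dim W = n" by blast
  have minW: "W' = W" if "subspace W'" "W' \<subseteq> W" "\<forall>Y\<in>t. \<forall>x\<in>W'. br Y x \<in> W'" "\<exists>w\<in>W'. w \<noteq> 0" for W'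
  proof -
    have "Q W'" using that W(1) unfolding Q_def by blast
    then have "n \<le> dim W'" unfolding n_def by (intro Least_le) blast
    then show ?thesis using subspace_dim_equal[of W' W] that W unfolding Q_def by auto
  qed
  obtain w where w: "w \<in> W" "w \<noteq> 0" using W(1) unfolding Q_def by blast
  have QW: "subspace W" "W \<subseteq> minus_eig \<theta>" "\<And>Y x. Y \<in> t \<Longrightarrow> x \<in> W \<Longrightarrow> br Y x \<in> W"
    using W(1) U(2) unfolding Q_def by auto
  have sc: "\<exists>c. \<forall>x\<in>W. br Y (br Y x) = c *\<^sub>R x" if "Y \<in> t" for Y
    by (rule scal_lemma[OF QW w minW that])
  have "good w" by (rule good_from_min[OF QW w sc])
  moreover have "w \<in> U" using w W(1) unfolding Q_def by blast
  ultimately show ?thesis using w by blast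
qed

lemma good_m: "good u \<Longrightarrow> u \<in> minus_eig \<theta>" unfolding good_def by blast

lemma good_partner:
  assumes "good u" "Y \<in> t" shows "br Y u \<in> span {u. good u}"
proof -
  obtain \<nu> u' where nu: "linear \<nu>" "u' \<in> minus_eig \<theta>" "\<forall>Y\<in>t. br Y u = \<nu> Y *\<^sub>R u' \<and> br Y u' = - (\<nu> Y *\<^sub>R u)"
    using assms(1) unfolding good_def by blast
  have "linear (\<lambda>Y. - \<nu> Y)" using nu(1) by (rule linear_compose_neg)
  moreover have "\<forall>Y\<in>t. br Y u' = (- \<nu> Y) *\<^sub>R u \<and> br Y u = - ((- \<nu> Y) *\<^sub>R u')" using nu(3) by simp
  ultimately have "good u'" unfolding good_def using nu(2) good_m[OF assms(1)] by blast
  then have "u' \<in> span {u. good u}" by (simp add: span_base)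
  then show ?thesis using nu(3) assms(2) by (simp add: span_scale)
qed

lemma m_span_good: "minus_eig \<theta> \<subseteq> span {u. good u}"
proof
  fix x assume x: "x \<in> minus_eig \<theta>"
  define R where "R = span {u. good u}"
  have Rm: "R \<subseteq> minus_eig \<theta>" unfolding R_def using good_m by (intro span_minimal m_sub) blast
  have Rinv: "br Y r \<in> R" if "Y \<in> t" "r \<in> R" for Y r
  proof -
    have "subspace {x. br Y x \<in> R}" unfolding R_def using linbr[of Y]
      by (auto simp: subspace_def linear_0 linear_add linear_scale span_zero span_add span_scale)
    then have "span {u. good u} \<subseteq> {x. br Y x \<in> R}"
      using good_partner[OF _ that(1)] unfolding R_def by (intro span_minimal) auto
    then show ?thesis using that(2) unfolding R_def by auto
  qed
  define U where "U = {z \<in> minus_eig \<theta>. \<forall>r\<in>R. P z r = 0}"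
  have Usub: "subspace U" unfolding U_def subspace_def using m_sub
    by (auto simp: subspace_0 subspace_add subspace_scale bilinear_lzero[OF P_bil]
        bilinear_ladd[OF P_bil] bilinear_lmul[OF P_bil])
  have Uinv: "br Y z \<in> U" if "Y \<in> t" "z \<in> U" for Y z
    using that brkm[OF tk[OF that(1)]] P_skew[OF tk[OF that(1)]] Rinv[OF that(1)] unfolding U_def by auto
  have U0: "z = 0" if zU: "z \<in> U" for z
  proof (rule ccontr)
    assume znz: "z \<noteq> 0"
    have Um: "U \<subseteq> minus_eig \<theta>" unfolding U_def by blast
    obtain u where u: "u \<in> U" "u \<noteq> 0" "good u"
      using find_good[OF Usub Um Uinv zU znz] by blast
    then have "u \<in> R" unfolding R_def by (simp add: span_base)
    then have "P u u = 0" using u(1) unfolding U_def by blast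
    then show False using P_pos[OF u(2)] by simp
  qed
  have Rs: "subspace R" unfolding R_def by simp
  obtain r where r: "r \<in> R" "\<forall>y\<in>R. P (x - r) y = 0" using P_proj[OF P_bil P_sym P_pos Rs] by blast
  have "x - r \<in> minus_eig \<theta>" using x Rm r(1) m_sub by (simp add: subset_eq subspace_diff)
  then have "x - r \<in> U" unfolding U_def using r(2) by blast
  then have "x - r = 0" by (rule U0)
  then have "x = r" by simp
  then show "x \<in> span {u. good u}" using r(1) unfolding R_def by simp
qed


end

lemma subspace_preimage: "linear f \<Longrightarrow> subspace C \<Longrightarrow> subspace {x. f x \<in> C}"
  unfolding subspace_def by (simp add: linear_0 linear_add linear_scale)

context LS begin

lemma k_in_span:
  assumes sig: "lie_involution br \<sigma>" "\<forall>x. \<sigma> (\<theta> x) = \<theta> (\<sigma> x)" and nc: "\<not> compact_lie br"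
    and ideal: "\<forall>I. lie_ideal br I \<and> \<sigma> ` I \<subseteq> I \<longrightarrow> I = {0} \<or> I = UNIV"
    and x: "\<theta> x = x"
  shows "x \<in> span {br a b | a b. a \<in> minus_eig \<theta> \<and> b \<in> minus_eig \<theta>}"
proof -
  define M where "M = minus_eig \<theta>"
  define C where "C = span {br a b | a b. a \<in> M \<and> b \<in> M}"
  have Ms: "subspace M" unfolding M_def by (rule m_sub)
  have Cs: "subspace C" unfolding C_def by simp
  have slin: "linear \<sigma>" and sbr: "\<And>x y. \<sigma> (br x y) = br (\<sigma> x) (\<sigma> y)"
    using sig(1) by (auto simp: lie_involution_def lie_aut_def)
  have Mth: "\<theta> a = - a" if "a \<in> M" for a using that unfolding M_def minus_eig_def by simp
  have Ck: "C \<subseteq> plus_eig \<theta>" unfolding C_def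
    by (intro span_minimal k_sub) (auto simp: plus_eig_def thbr Mth bilinear_lneg[OF bl] bilinear_rneg[OF bl])
  have Cth: "\<theta> s = s" if "s \<in> C" for s using Ck that unfolding plus_eig_def by blast
  have gen: "br a b \<in> C" if "a \<in> M" "b \<in> M" for a b unfolding C_def using that by (intro span_base) blast
  define I where "I = {a + s | a s. a \<in> M \<and> s \<in> C}"
  have MI: "a \<in> I" if "a \<in> M" for a unfolding I_def using that subspace_0[OF Cs] by force
  have CI: "s \<in> I" if "s \<in> C" for s unfolding I_def using that subspace_0[OF Ms] by force
  have Is: "subspace I"
  proof -
    have z0: "0 \<in> I" using MI subspace_0[OF Ms] by blast
    have addI: "x + y \<in> I" if xyI: "x \<in> I" "y \<in> I" for x y
    proof -
      obtain a s a' s' where "x = a + s" "y = a' + s'" "a \<in> M" "s \<in> C" "a' \<in> M" "s' \<in> C"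
        using xyI unfolding I_def by blast
      then show ?thesis unfolding I_def using Ms Cs
        by (intro CollectI exI[of _ "a + a'"] exI[of _ "s + s'"]) (auto simp: subspace_add algebra_simps)
    qed
    have scI: "c *\<^sub>R x \<in> I" if xI: "x \<in> I" for x c
    proof -
      obtain a s where "x = a + s" "a \<in> M" "s \<in> C" using xI unfolding I_def by blast
      then show ?thesis unfolding I_def using Ms Cs
        by (intro CollectI exI[of _ "c *\<^sub>R a"] exI[of _ "c *\<^sub>R s"]) (auto simp: subspace_scale scaleR_add_right)
    qed
    show ?thesis unfolding subspace_def
    proof (intro conjI ballI allI)
      show "0 \<in> I" by (rule z0)
    next
      fix x y assume "x \<in> I" "y \<in> I" then show "x + y \<in> I" by (rule addI)
    next
      fix c x assume "x \<in> I" then show "c *\<^sub>R x \<in> I" by (rule scI)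
    qed
  qed
  have kC: "br z s \<in> C" if "\<theta> z = z" "s \<in> C" for z s
  proof -
    have "subspace {s. br z s \<in> C}" using linbr[of z] Cs by (rule subspace_preimage)
    moreover have "br z (br a b) \<in> C" if ab: "a \<in> M" "b \<in> M" for a b
    proof -
      have za: "br z a \<in> M" "br z b \<in> M" using brkm[OF \<open>\<theta> z = z\<close>] ab unfolding M_def by auto
      have "br (br z a) b \<in> C" "br a (br z b) \<in> C" using gen za ab by auto
      then show ?thesis using der[of z a b] subspace_add[OF Cs] by simp
    qed
    ultimately have "C \<subseteq> {s. br z s \<in> C}" unfolding C_def by (intro span_minimal) blast
    then show ?thesis using that(2) by blast
  qed
  have mC: "br z s \<in> M" if "z \<in> M" "s \<in> C" for z s
    unfolding M_def minus_eig_def using that by (simp add: thbr Mth Cth bilinear_lneg[OF bl])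
  have ideal_I: "lie_ideal br I"
    unfolding lie_ideal_def
  proof (intro conjI Is allI impI)
    fix z y assume y: "y \<in> I"
    obtain a s where as: "y = a + s" "a \<in> M" "s \<in> C" using y unfolding I_def by blast
    define zk where "zk = (1/2) *\<^sub>R (z + \<theta> z)"
    define zm where "zm = (1/2) *\<^sub>R (z - \<theta> z)"
    have zz: "z = zk + zm" unfolding zk_def zm_def by (simp add: algebra_simps scaleR_2[symmetric])
    have zk: "\<theta> zk = zk" unfolding zk_def using thlin by (simp add: linear_scale linear_add thth add.commute)
    have zm: "zm \<in> M" unfolding zm_def M_def minus_eig_def using thlin by (simp add: linear_scale linear_diff thth)
    have "br z y = (br zk a + br zm a) + (br zk s + br zm s)"
      unfolding zz as(1) by (simp add: bilinear_ladd[OF bl] bilinear_radd[OF bl] algebra_simps)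
    moreover have "br zk a \<in> I" using MI brkm[OF zk] as(2) unfolding M_def by blast
    moreover have "br zm a \<in> I" using CI gen zm as(2) by blast
    moreover have "br zk s \<in> I" using CI kC[OF zk as(3)] by blast
    moreover have "br zm s \<in> I" using MI mC[OF zm as(3)] by blast
    ultimately show "br z y \<in> I" using Is by (simp add: subspace_add)
  qed
  have sM: "\<sigma> a \<in> M" if aM: "a \<in> M" for a
  proof -
    have "\<theta> (\<sigma> a) = \<sigma> (\<theta> a)" using sig(2) by simp
    also have "\<dots> = \<sigma> (- a)" using Mth[OF aM] by simp
    also have "\<dots> = - \<sigma> a" by (rule linear_neg[OF slin])
    finally show ?thesis unfolding M_def minus_eig_def by simp
  qed
  have sI: "\<sigma> ` I \<subseteq> I"
  proof
    fix y assume "y \<in> \<sigma> ` I"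
    then obtain a s where as: "y = \<sigma> (a + s)" "a \<in> M" "s \<in> C" unfolding I_def by blast
    have "\<sigma> a \<in> M" using as(2) by (rule sM)
    moreover have "\<sigma> s \<in> C"
    proof -
      have "subspace {s. \<sigma> s \<in> C}" using slin Cs by (rule subspace_preimage)
      moreover have "\<sigma> (br a b) \<in> C" if "a \<in> M" "b \<in> M" for a b
      proof -
        have "\<sigma> a \<in> M" "\<sigma> b \<in> M" using that sM by auto
        then show ?thesis using gen sbr by simp
      qed
      ultimately have "C \<subseteq> {s. \<sigma> s \<in> C}" unfolding C_def by (intro span_minimal) blast
      then show ?thesis using as(3) by blast
    qed
    ultimately show "y \<in> I" unfolding as(1) I_def using slin by (auto simp: linear_add)
  qed
  have "\<exists>a\<in>M. a \<noteq> 0"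
  proof (rule ccontr)
    assume "\<not> (\<exists>a\<in>M. a \<noteq> 0)"
    then have all: "\<theta> z = z" for z
    proof -
      have "z - \<theta> z \<in> M" unfolding M_def minus_eig_def using thlin by (simp add: linear_diff thth)
      then show ?thesis using \<open>\<not> (\<exists>a\<in>M. a \<noteq> 0)\<close> by auto
    qed
    have "compact_lie br" unfolding compact_lie_def using kpos all by (metis neg_0_less_iff_less)
    then show False using nc by simp
  qed
  then have "I \<noteq> {0}" using MI by blast
  then have "I = UNIV" using ideal ideal_I sI by blast
  then obtain a s where as: "x = a + s" "a \<in> M" "s \<in> C" unfolding I_def by blast
  have "a = x - s" using as(1) by simp
  then have "\<theta> a = a" using x Cth[OF as(3)] thlin by (simp add: linear_diff)
  moreover have "\<theta> a = - a" using Mth as(2) by blast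
  ultimately have na: "- a = a" by simp
  have "a + a = 0" using na by (metis add.right_inverse)
  then have "2 *\<^sub>R a = 0" by (simp add: scaleR_2)
  then have "a = 0" by simp
  then show ?thesis using as unfolding C_def M_def by simp
qed

end

lemma alg4:
  fixes A L M a1 a2 a3 a4 b1 b2 b3 b4 e d :: real
  assumes "A * b1 = L * a2 + M * a3" "A * b2 = - L * a1 + M * a4"
    "A * b3 = L * a4 - M * a1" "A * b4 = - L * a3 - M * a2"
    "- A * a1 = L * b2 + M * b3" "- A * a2 = - L * b1 + M * b4"
    "- A * a3 = L * b4 - M * b1" "- A * a4 = - L * b3 - M * b2"
    and ed: "e = 1 \<or> e = -1" "d = 1 \<or> d = -1"
  shows "(A - e * L - d * M) * (a1 - e * b2 - d * b3 - e * d * a4) = 0"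
  using ed
proof (elim disjE)
  assume "e = 1" "d = 1" then show ?thesis using assms(1-8) by (simp add: algebra_simps; linarith)
next
  assume "e = 1" "d = -1" then show ?thesis using assms(1-8) by (simp add: algebra_simps; linarith)
next
  assume "e = -1" "d = 1" then show ?thesis using assms(1-8) by (simp add: algebra_simps; linarith)
next
  assume "e = -1" "d = -1" then show ?thesis using assms(1-8) by (simp add: algebra_simps; linarith)
qed


context LS begin

lemma br_span:
  assumes "x \<in> span A" "y \<in> span B"
  shows "br x y \<in> span {br a b | a b. a \<in> A \<and> b \<in> B}"
proof -
  define T where "T = span {br a b | a b. a \<in> A \<and> b \<in> B}"
  have Ts: "subspace T" unfolding T_def by simp
  have 1: "br x' b \<in> T" if "x' \<in> span A" "b \<in> B" for x' b
  proof -
    have "span A \<subseteq> {x. br x b \<in> T}"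
      using that(2) unfolding T_def
      by (intro span_minimal subspace_preimage[OF linbrL] subspace_span) (auto intro: span_base)
    then show ?thesis using that(1) by blast
  qed
  have "span B \<subseteq> {y. br x y \<in> T}"
    using 1[OF assms(1)] by (intro span_minimal subspace_preimage[OF linbr Ts]) auto
  then show ?thesis using assms(2) unfolding T_def by blast
qed

lemma good_root:
  assumes u: "u \<noteq> 0" "u \<in> minus_eig \<theta>" "u' \<in> minus_eig \<theta>"
    and nu: "linear \<nu>" "\<forall>Y\<in>t. br Y u = \<nu> Y *\<^sub>R u' \<and> br Y u' = - (\<nu> Y *\<^sub>R u)"
    and e: "e = 1 \<or> e = (-1::real)"
  shows "is_root br t (\<lambda>Y. e * \<nu> Y) (minus_eig \<theta>) \<or> (\<forall>Y\<in>t. e * \<nu> Y = 0)"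
proof (cases "\<forall>Y\<in>t. \<nu> Y = 0")
  case True then show ?thesis by simp
next
  case False
  then obtain Y where Y: "Y \<in> t" "\<nu> Y \<noteq> 0" by blast
  have "\<exists>Y\<in>t. e * \<nu> Y \<noteq> 0" using Y e by auto
  moreover have "\<exists>X\<in>weight_space br t (\<lambda>Y. e * \<nu> Y) (minus_eig \<theta>). X \<noteq> (0, 0)"
    using e
  proof
    assume e1: "e = 1"
    have "(u', u) \<in> weight_space br t (\<lambda>Y. e * \<nu> Y) (minus_eig \<theta>)"
      unfolding weight_space_def using u nu e1 by auto
    then show ?thesis using u(1) by blast
  next
    assume e1: "e = -1"
    have "(u, u') \<in> weight_space br t (\<lambda>Y. e * \<nu> Y) (minus_eig \<theta>)"
      unfolding weight_space_def using u nu e1 by auto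
    then show ?thesis using u(1) by blast
  qed
  ultimately show ?thesis unfolding is_root_def by blast
qed

lemma lin_cmul: "linear (f :: 'a \<Rightarrow> real) \<Longrightarrow> linear (\<lambda>Y. e * f Y)"
  by (rule linearI) (simp_all add: linear_add linear_scale algebra_simps)

lemma main:
  assumes sig: "lie_involution br \<sigma>" "\<forall>x. \<sigma> (\<theta> x) = \<theta> (\<sigma> x)" and nc: "\<not> compact_lie br"
    and ideal: "\<forall>I. lie_ideal br I \<and> \<sigma> ` I \<subseteq> I \<longrightarrow> I = {0} \<or> I = UNIV"
    and lin\<alpha>: "linear \<alpha>"
    and Z: "Z1 \<in> plus_eig \<theta>" "Z1 \<noteq> 0" "\<forall>Y\<in>t. br Y Z1 = - (\<alpha> Y *\<^sub>R Z2) \<and> br Y Z2 = \<alpha> Y *\<^sub>R Z1"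
  shows "\<exists>\<beta> \<gamma> :: 'a \<Rightarrow> real. linear \<beta> \<and> linear \<gamma> \<and>
           (\<forall>Y\<in>t. \<alpha> Y = \<beta> Y + \<gamma> Y) \<and>
           (is_root br t \<beta> (minus_eig \<theta>) \<or> (\<forall>Y\<in>t. \<beta> Y = 0)) \<and>
           (is_root br t \<gamma> (minus_eig \<theta>) \<or> (\<forall>Y\<in>t. \<gamma> Y = 0))"
proof -
  define G where "G = {br a b | a b. a \<in> minus_eig \<theta> \<and> b \<in> minus_eig \<theta>}"
  define G2 where "G2 = {br a b | a b. a \<in> {u. good u} \<and> b \<in> {u. good u}}"
  have "Z1 \<in> span G" unfolding G_def
    using k_in_span[OF sig nc ideal] Z(1) unfolding plus_eig_def by simp
  moreover have "G \<subseteq> span G2"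
  proof
    fix g assume "g \<in> G"
    then obtain a b where ab: "g = br a b" "a \<in> minus_eig \<theta>" "b \<in> minus_eig \<theta>" unfolding G_def by blast
    have "a \<in> span {u. good u}" "b \<in> span {u. good u}" using ab m_span_good by auto
    then show "g \<in> span G2" unfolding G2_def ab(1) by (rule br_span)
  qed
  then have "span G \<subseteq> span G2" by (intro span_minimal subspace_span)
  ultimately have Z1s: "Z1 \<in> span G2" by blast
  have "\<exists>g\<in>G2. P Z1 g \<noteq> 0"
  proof (rule ccontr)
    assume "\<not> (\<exists>g\<in>G2. P Z1 g \<noteq> 0)"
    then have "P Z1 Z1 = 0" using span_zero_form[OF bil_linR[OF P_bil], of G2 Z1 Z1] Z1s by blast
    then show False using P_pos[OF Z(2)] by simp
  qed
  then obtain u v where uv: "good u" "good v" "P Z1 (br u v) \<noteq> 0" unfolding G2_def by blast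
  obtain la u' where la: "linear la" "u' \<in> minus_eig \<theta>" "\<forall>Y\<in>t. br Y u = la Y *\<^sub>R u' \<and> br Y u' = - (la Y *\<^sub>R u)"
    using uv(1) unfolding good_def by blast
  obtain mu v' where mu: "linear mu" "v' \<in> minus_eig \<theta>" "\<forall>Y\<in>t. br Y v = mu Y *\<^sub>R v' \<and> br Y v' = - (mu Y *\<^sub>R v)"
    using uv(2) unfolding good_def by blast
  have unz: "u \<noteq> 0" and vnz: "v \<noteq> 0"
    using uv(3) by (auto simp: bilinear_lzero[OF bl] bilinear_rzero[OF bl] bilinear_rzero[OF P_bil])
  define a1 where "a1 = P Z1 (br u v)"
  define a2 where "a2 = P Z1 (br u' v)"
  define a3 where "a3 = P Z1 (br u v')"
  define a4 where "a4 = P Z1 (br u' v')"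
  define b1 where "b1 = P Z2 (br u v)"
  define b2 where "b2 = P Z2 (br u' v)"
  define b3 where "b3 = P Z2 (br u v')"
  define b4 where "b4 = P Z2 (br u' v')"
  have a1nz: "a1 \<noteq> 0" using uv(3) a1_def by simp
  have R0: "(\<alpha> Y - e * la Y - d * mu Y) * (a1 - e * b2 - d * b3 - e * d * a4) = 0"
    if Y: "Y \<in> t" and ed: "e = 1 \<or> e = -1" "d = 1 \<or> d = -1" for Y e d
  proof -
    have rel1: "P Z1 (br Y w) = \<alpha> Y * P Z2 w" for w
      using P_skew[OF tk[OF Y], of Z1 w] Z(3) Y by (simp add: bilinear_lneg[OF P_bil] bilinear_lmul[OF P_bil])
    have rel2: "P Z2 (br Y w) = - \<alpha> Y * P Z1 w" for w
      using P_skew[OF tk[OF Y], of Z2 w] Z(3) Y by (simp add: bilinear_lmul[OF P_bil])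
    have du: "br Y u = la Y *\<^sub>R u'" "br Y u' = - (la Y *\<^sub>R u)" using la(3) Y by auto
    have dv: "br Y v = mu Y *\<^sub>R v'" "br Y v' = - (mu Y *\<^sub>R v)" using mu(3) Y by auto
    have w1: "br Y (br u v) = la Y *\<^sub>R br u' v + mu Y *\<^sub>R br u v'"
      using der[of Y u v] du dv by (simp add: bilinear_lmul[OF bl] bilinear_rmul[OF bl])
    have w2: "br Y (br u' v) = - (la Y *\<^sub>R br u v) + mu Y *\<^sub>R br u' v'"
      using der[of Y u' v] du dv by (simp add: bilinear_lmul[OF bl] bilinear_rmul[OF bl] bilinear_lneg[OF bl])
    have w3: "br Y (br u v') = la Y *\<^sub>R br u' v' - mu Y *\<^sub>R br u v"
      using der[of Y u v'] du dv by (simp add: bilinear_lmul[OF bl] bilinear_rmul[OF bl] bilinear_rneg[OF bl])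
    have w4: "br Y (br u' v') = - (la Y *\<^sub>R br u v') - mu Y *\<^sub>R br u' v"
      using der[of Y u' v'] du dv
      by (simp add: bilinear_lmul[OF bl] bilinear_rmul[OF bl] bilinear_lneg[OF bl] bilinear_rneg[OF bl])
    note Pl = bilinear_radd[OF P_bil] bilinear_rmul[OF P_bil] bilinear_rneg[OF P_bil] bilinear_rsub[OF P_bil]
    have E1: "\<alpha> Y * b1 = la Y * a2 + mu Y * a3" using rel1[of "br u v"] w1 unfolding a2_def a3_def b1_def by (simp add: Pl)
    have E2: "\<alpha> Y * b2 = - la Y * a1 + mu Y * a4" using rel1[of "br u' v"] w2 unfolding a1_def a4_def b2_def by (simp add: Pl)
    have E3: "\<alpha> Y * b3 = la Y * a4 - mu Y * a1" using rel1[of "br u v'"] w3 unfolding a1_def a4_def b3_def by (simp add: Pl)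
    have E4: "\<alpha> Y * b4 = - la Y * a3 - mu Y * a2" using rel1[of "br u' v'"] w4 unfolding a2_def a3_def b4_def by (simp add: Pl)
    have E5: "- \<alpha> Y * a1 = la Y * b2 + mu Y * b3" using rel2[of "br u v"] w1 unfolding a1_def b2_def b3_def by (simp add: Pl)
    have E6: "- \<alpha> Y * a2 = - la Y * b1 + mu Y * b4" using rel2[of "br u' v"] w2 unfolding a2_def b1_def b4_def by (simp add: Pl)
    have E7: "- \<alpha> Y * a3 = la Y * b4 - mu Y * b1" using rel2[of "br u v'"] w3 unfolding a3_def b1_def b4_def by (simp add: Pl)
    have E8: "- \<alpha> Y * a4 = - la Y * b3 - mu Y * b2" using rel2[of "br u' v'"] w4 unfolding a4_def b2_def b3_def by (simp add: Pl)
    show ?thesis by (rule alg4[OF E1 E2 E3 E4 E5 E6 E7 E8 ed])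
  qed
  define R where "R e d = a1 - e * b2 - d * b3 - e * d * a4" for e d :: real
  have "R 1 1 + R 1 (-1) + R (-1) 1 + R (-1) (-1) = 4 * a1" unfolding R_def by simp
  then have "\<exists>e d. (e = 1 \<or> e = -1) \<and> (d = 1 \<or> d = -1) \<and> R e d \<noteq> 0"
  proof (rule contrapos_pp)
    assume "\<not> (\<exists>e d. (e = 1 \<or> e = -1) \<and> (d = 1 \<or> d = -1) \<and> R e d \<noteq> 0)"
    then have "R 1 1 = 0" "R 1 (-1) = 0" "R (-1) 1 = 0" "R (-1) (-1) = 0" by blast+
    then show "R 1 1 + R 1 (-1) + R (-1) 1 + R (-1) (-1) \<noteq> 4 * a1" using a1nz by simp
  qed
  then obtain e d where ed: "e = 1 \<or> e = -1" "d = 1 \<or> d = -1" "R e d \<noteq> 0" by blast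
  have \<alpha>eq: "\<alpha> Y = e * la Y + d * mu Y" if Y: "Y \<in> t" for Y
  proof -
    have "(\<alpha> Y - e * la Y - d * mu Y) * R e d = 0" using R0[OF Y ed(1,2)] unfolding R_def .
    then have "\<alpha> Y - e * la Y - d * mu Y = 0" using ed(3) by simp
    then show ?thesis by simp
  qed
  show ?thesis
  proof (intro exI conjI)
    show "linear (\<lambda>Y. e * la Y)" by (rule lin_cmul[OF la(1)])
    show "linear (\<lambda>Y. d * mu Y)" by (rule lin_cmul[OF mu(1)])
    show "\<forall>Y\<in>t. \<alpha> Y = e * la Y + d * mu Y" using \<alpha>eq by blast
    show "is_root br t (\<lambda>Y. e * la Y) (minus_eig \<theta>) \<or> (\<forall>Y\<in>t. e * la Y = 0)"
      by (rule good_root[OF unz good_m[OF uv(1)] la(2) la(1) la(3) ed(1)])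
    show "is_root br t (\<lambda>Y. d * mu Y) (minus_eig \<theta>) \<or> (\<forall>Y\<in>t. d * mu Y = 0)"
      by (rule good_root[OF vnz good_m[OF uv(2)] mu(2) mu(1) mu(3) ed(2)])
  qed
qed

end

theorem lemma1:
  fixes br :: "'a::euclidean_space \<Rightarrow> 'a \<Rightarrow> 'a"
    and \<sigma> \<theta> :: "'a \<Rightarrow> 'a"
    and t :: "'a set"
    and \<alpha> :: "'a \<Rightarrow> real"
  assumes "semisimple br"
    and "cartan_involution br \<theta>"
    and "lie_involution br \<sigma>"
    and "\<forall>x. \<sigma> (\<theta> x) = \<theta> (\<sigma> x)"
    and "\<not> compact_lie br"
    and "\<forall>I. lie_ideal br I \<and> \<sigma> ` I \<subseteq> I \<longrightarrow> I = {0} \<or> I = UNIV"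
    and "max_abelian_subspace br t (plus_eig \<theta> \<inter> minus_eig \<sigma>)"
    and "linear \<alpha>"
    and "is_root br t \<alpha> UNIV"
    and "\<exists>X\<in>weight_space br t \<alpha> (plus_eig \<theta>). X \<noteq> (0, 0)"
  shows "\<exists>\<beta> \<gamma> :: 'a \<Rightarrow> real. linear \<beta> \<and> linear \<gamma> \<and>
           (\<forall>Y\<in>t. \<alpha> Y = \<beta> Y + \<gamma> Y) \<and>
           (is_root br t \<beta> (minus_eig \<theta>) \<or> (\<forall>Y\<in>t. \<beta> Y = 0)) \<and>
           (is_root br t \<gamma> (minus_eig \<theta>) \<or> (\<forall>Y\<in>t. \<gamma> Y = 0))"
proof -
  have ts: "subspace t" and tsub: "t \<subseteq> plus_eig \<theta> \<inter> minus_eig \<sigma>"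
    and tab: "\<forall>x\<in>t. \<forall>y\<in>t. br x y = 0"
    using assms(7) unfolding max_abelian_subspace_def by blast+
  interpret LS br \<theta> t
  proof
    show "lie_algebra br" using assms(1) unfolding semisimple_def by blast
    show "cartan_involution br \<theta>" by (rule assms(2))
    show "subspace t" by (rule ts)
    show "\<And>Y. Y \<in> t \<Longrightarrow> \<theta> Y = Y" using tsub unfolding plus_eig_def by blast
    show "\<And>Y Z. Y \<in> t \<Longrightarrow> Z \<in> t \<Longrightarrow> br Y Z = 0" using tab by blast
  qed
  obtain X1 X2 where X: "(X1, X2) \<in> weight_space br t \<alpha> (plus_eig \<theta>)" "(X1, X2) \<noteq> (0, 0)"
    using assms(10) by auto
  have Xk: "X1 \<in> plus_eig \<theta>" "X2 \<in> plus_eig \<theta>"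
    and Xe: "\<forall>Y\<in>t. br Y X1 = - (\<alpha> Y *\<^sub>R X2) \<and> br Y X2 = \<alpha> Y *\<^sub>R X1"
    using X(1) unfolding weight_space_def by auto
  show ?thesis
  proof (cases "X1 = 0")
    case False
    show ?thesis by (rule main[OF assms(3,4,5,6,8) Xk(1) False Xe])
  next
    case True
    then have X2nz: "X2 \<noteq> 0" using X(2) by simp
    have Xe': "\<forall>Y\<in>t. br Y X2 = - (\<alpha> Y *\<^sub>R (- X1)) \<and> br Y (- X1) = \<alpha> Y *\<^sub>R X2"
      using Xe by (simp add: bilinear_rneg[OF bl])
    show ?thesis by (rule main[OF assms(3,4,5,6,8) Xk(2) X2nz Xe'])
  qed
qed

end
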